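(* Let $k\ge 2$ be an integer and let $R$ and $B$ be disjoint finite sets of points in the plane such that no three points of $R\cup B$ are collinear. If $2\le |B|\le (k-2)|R|+2$, then there exists a non-crossing geometric spanning tree $T$ on $R\cup B$ such that the set of leaves of $T$ is exactly $B$ and the maximum degree of $T$ is at most $k$. Moreover, if $|B|=(k-2)|R|+2$, then $T$ satisfies $\deg_T(x)=k$ for every $x\in R$.
   Context: A geometric spanning tree on a point set $P$ is a tree with vertex set $P$ whose edges are drawn as straight-line segments between their endpoints; it is non-crossing if no two edges intersect except at a common endpoint. $\deg_T(v)$ denotes the degree of vertex $v$ in $T$, and a leaf is a vertex of degree one. *)

theory Defs
  imports "HOL-Analysis.Analysis"
begin

type_synonym point = "real ^ 2"

definition graph_on :: "'a set \<Rightarrow> 'a set set \<Rightarrow> bool" where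
  "graph_on P E \<longleftrightarrow> (\<forall>e\<in>E. \<exists>u v. e = {u, v} \<and> u \<in> P \<and> v \<in> P \<and> u \<noteq> v)"

definition degree :: "'a set set \<Rightarrow> 'a \<Rightarrow> nat" where
  "degree E v = card {e \<in> E. v \<in> e}"

definition connected_graph :: "'a set \<Rightarrow> 'a set set \<Rightarrow> bool" where
  "connected_graph P E \<longleftrightarrow>
     (\<forall>u\<in>P. \<forall>v\<in>P. (u, v) \<in> {(x, y). {x, y} \<in> E}\<^sup>*)"

definition has_cycle :: "'a set set \<Rightarrow> bool" where
  "has_cycle E \<longleftrightarrow> (\<exists>vs. length vs \<ge> 3 \<and> distinct vs \<and>
      (\<forall>i < length vs - 1. {vs ! i, vs ! (i+1)} \<in> E) \<and> {last vs, hd vs} \<in> E)"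

definition is_tree :: "'a set \<Rightarrow> 'a set set \<Rightarrow> bool" where
  "is_tree P E \<longleftrightarrow> graph_on P E \<and> connected_graph P E \<and> \<not> has_cycle E"

definition leaves :: "'a set \<Rightarrow> 'a set set \<Rightarrow> 'a set" where
  "leaves P E = {v \<in> P. degree E v = 1}"

definition non_crossing :: "point set set \<Rightarrow> bool" where
  "non_crossing E \<longleftrightarrow> (\<forall>a b c d. {a, b} \<in> E \<longrightarrow> {c, d} \<in> E \<longrightarrow> {a, b} \<noteq> {c, d} \<longrightarrow>
      closed_segment a b \<inter> closed_segment c d \<subseteq> {a, b} \<inter> {c, d})"

definition no_three_collinear :: "point set \<Rightarrow> bool" where
  "no_three_collinear P \<longleftrightarrow> (\<forall>a\<in>P. \<forall>b\<in>P. \<forall>c\<in>P.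
      a \<noteq> b \<and> b \<noteq> c \<and> a \<noteq> c \<longrightarrow> \<not> collinear {a, b, c})"

end

theory Submission
  imports Defs
begin


definition cyc :: "'a set set \<Rightarrow> 'a list \<Rightarrow> bool" where
  "cyc E vs \<longleftrightarrow> length vs \<ge> 3 \<and> distinct vs \<and>
      (\<forall>i < length vs - 1. {vs ! i, vs ! (i+1)} \<in> E) \<and> {last vs, hd vs} \<in> E"

lemma has_cycle_cyc: "has_cycle E \<longleftrightarrow> (\<exists>vs. cyc E vs)"
  unfolding has_cycle_def cyc_def by blast

lemma cyc_rotate1:
  assumes "cyc E vs" shows "cyc E (rotate1 vs)"
proof -
  obtain x xs where vs: "vs = x # xs" using assms unfolding cyc_def by (cases vs) auto
  have len: "length xs \<ge> 2" using assms vs unfolding cyc_def by auto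
  have r: "rotate1 vs = xs @ [x]" using vs by simp
  have d: "distinct (xs @ [x])" using assms vs unfolding cyc_def by auto
  have e: "\<forall>i < length (xs@[x]) - 1. {(xs@[x]) ! i, (xs@[x]) ! (i+1)} \<in> E"
  proof (intro allI impI)
    fix i assume i: "i < length (xs@[x]) - 1"
    show "{(xs@[x]) ! i, (xs@[x]) ! (i+1)} \<in> E"
    proof (cases "i + 1 < length xs")
      case True
      have "{vs ! (i+1), vs ! (i+1+1)} \<in> E" using assms vs True unfolding cyc_def by auto
      then show ?thesis using True vs by (simp add: nth_append)
    next
      case False
      then have ii: "i = length xs - 1" using i by auto
      have "{last vs, hd vs} \<in> E" using assms unfolding cyc_def by auto
      moreover have "last vs = xs ! i" using vs ii len by (auto simp: last_conv_nth)
      moreover have "(xs@[x]) ! i = xs ! i" using ii len by (auto simp: nth_append)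
      moreover have "(xs@[x]) ! (i+1) = x" using ii len by (auto simp: nth_append)
      moreover have "hd vs = x" using vs by simp
      ultimately show ?thesis by (simp add: insert_commute)
    qed
  qed
  have l: "{last (xs@[x]), hd (xs@[x])} \<in> E"
  proof -
    have "0 < length vs - 1" using assms unfolding cyc_def by auto
    then have "{vs ! 0, vs ! (0+1)} \<in> E" using assms unfolding cyc_def by blast
    then show ?thesis using vs len by (cases xs) (auto simp: insert_commute)
  qed
  show ?thesis unfolding cyc_def r using d e l len by auto
qed

lemma cyc_rotate: "cyc E vs \<Longrightarrow> cyc E (rotate n vs)"
proof (induction n)
  case (Suc n) then have "cyc E (rotate n vs)" by simp
  then show ?case by (simp add: cyc_rotate1)
qed simp



lemma graph_on_edge:
  assumes "graph_on V E" "{x,y} \<in> E" shows "x \<in> V" "y \<in> V" "x \<noteq> y"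
proof -
  obtain u v where "{x,y} = {u,v}" "u \<in> V" "v \<in> V" "u \<noteq> v" using assms unfolding graph_on_def by blast
  then show "x \<in> V" "y \<in> V" "x \<noteq> y" by (auto simp: doubleton_eq_iff)
qed

lemma cyc_side:
  assumes c: "cyc (E1 \<union> E2) vs" and g1: "graph_on V1 E1" and g2: "graph_on V2 E2"
    and I: "V1 \<inter> V2 = {r}"
    and h: "hd vs = r \<or> r \<notin> set vs" and s: "vs ! 1 \<in> V1"
  shows "cyc E1 vs"
proof -
  define n where "n = length vs"
  have n3: "n \<ge> 3" and dist: "distinct vs" and edges: "\<forall>i < n - 1. {vs ! i, vs ! (i+1)} \<in> E1 \<union> E2"
    and cl: "{last vs, hd vs} \<in> E1 \<union> E2"
    using c unfolding cyc_def n_def by auto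
  have edge: "y \<in> V1 \<and> {x,y} \<in> E1" if "{x,y} \<in> E1 \<union> E2" "x \<in> V1" "x \<noteq> r" for x y
  proof (cases "{x,y} \<in> E1")
    case True then show ?thesis using graph_on_edge[OF g1] by blast
  next
    case False
    then have "{x,y} \<in> E2" using that by blast
    then have "x \<in> V2" using graph_on_edge[OF g2] by blast
    then show ?thesis using that I by blast
  qed
  have nr: "vs ! j \<noteq> r" if "1 \<le> j" "j < n" for j
  proof
    assume a: "vs ! j = r"
    show False
    proof (cases "hd vs = r")
      case True
      then have "vs ! 0 = vs ! j" using a n3 by (simp add: hd_conv_nth n_def[symmetric] flip: length_greater_0_conv)
      moreover have "0 < length vs" "j < length vs" using n3 that n_def by auto
      ultimately show False using dist that nth_eq_iff_index_eq by fastforce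
    next
      case False
      then have "r \<notin> set vs" using h by blast
      then show False using a that by (metis nth_mem n_def)
    qed
  qed
  have allV1: "vs ! j \<in> V1" if "1 \<le> j" "j < n" for j
    using that
  proof (induction j)
    case 0 then show ?case by simp
  next
    case (Suc j)
    show ?case
    proof (cases "j = 0")
      case True then show ?thesis using s by simp
    next
      case False
      then have "vs ! j \<in> V1" using Suc by auto
      moreover have "vs ! j \<noteq> r" using nr False Suc by auto
      moreover have "{vs ! j, vs ! (j+1)} \<in> E1 \<union> E2" using edges Suc by auto
      ultimately show ?thesis using edge by auto
    qed
  qed
  have lastv: "last vs = vs ! (n-1)" using n3 unfolding n_def by (simp add: last_conv_nth flip: length_greater_0_conv)
  have hdv: "hd vs = vs ! 0" using n3 unfolding n_def by (simp add: hd_conv_nth flip: length_greater_0_conv)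
  have lV: "last vs \<in> V1" "last vs \<noteq> r" using lastv allV1 nr n3 by auto
  have cl1: "{last vs, hd vs} \<in> E1" using edge[OF cl lV] by blast
  have e1: "{vs ! i, vs ! (i+1)} \<in> E1" if "i < n - 1" for i
  proof (cases "i = 0")
    case True
    have "{vs ! 1, vs ! 0} \<in> E1 \<union> E2" using edges True that by (simp add: insert_commute)
    moreover have "vs ! 1 \<noteq> r" using nr n3 by auto
    ultimately have "{vs ! 1, vs ! 0} \<in> E1" using edge s by blast
    then show ?thesis using True by (simp add: insert_commute)
  next
    case False
    have "{vs ! i, vs ! (i+1)} \<in> E1 \<union> E2" using edges that by blast
    moreover have "vs ! i \<in> V1" "vs ! i \<noteq> r" using allV1 nr that False by auto
    ultimately show ?thesis using edge by blast
  qed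
  show ?thesis unfolding cyc_def using n3 dist e1 cl1 n_def by auto
qed

lemma tree_glue:
  assumes t1: "is_tree V1 E1" and t2: "is_tree V2 E2" and I: "V1 \<inter> V2 = {r}"
  shows "is_tree (V1 \<union> V2) (E1 \<union> E2)"
proof -
  have g1: "graph_on V1 E1" and g2: "graph_on V2 E2" and c1: "connected_graph V1 E1"
    and c2: "connected_graph V2 E2" and a1: "\<not> has_cycle E1" and a2: "\<not> has_cycle E2"
    using t1 t2 unfolding is_tree_def by auto
  have g: "graph_on (V1 \<union> V2) (E1 \<union> E2)" unfolding graph_on_def
  proof
    fix e assume "e \<in> E1 \<union> E2"
    then show "\<exists>u v. e = {u, v} \<and> u \<in> V1 \<union> V2 \<and> v \<in> V1 \<union> V2 \<and> u \<noteq> v"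
    proof
      assume "e \<in> E1"
      then obtain u v where "e = {u, v}" "u \<in> V1" "v \<in> V1" "u \<noteq> v" using g1 unfolding graph_on_def by blast
      then show ?thesis by blast
    next
      assume "e \<in> E2"
      then obtain u v where "e = {u, v}" "u \<in> V2" "v \<in> V2" "u \<noteq> v" using g2 unfolding graph_on_def by blast
      then show ?thesis by blast
    qed
  qed
  let ?rel = "{(x, y). {x, y} \<in> E1 \<union> E2}"
  have m1: "(u,v) \<in> ?rel\<^sup>*" if "u \<in> V1" "v \<in> V1" for u v
  proof -
    have uv: "(u,v) \<in> {(x, y). {x, y} \<in> E1}\<^sup>*" using c1 that unfolding connected_graph_def by blast
    moreover have sub: "{(x, y). {x, y} \<in> E1} \<subseteq> ?rel" by blast
    show ?thesis using subsetD[OF rtrancl_mono[OF sub] uv] .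
  qed
  have m2: "(u,v) \<in> ?rel\<^sup>*" if "u \<in> V2" "v \<in> V2" for u v
  proof -
    have uv: "(u,v) \<in> {(x, y). {x, y} \<in> E2}\<^sup>*" using c2 that unfolding connected_graph_def by blast
    moreover have sub: "{(x, y). {x, y} \<in> E2} \<subseteq> ?rel" by blast
    show ?thesis using subsetD[OF rtrancl_mono[OF sub] uv] .
  qed
  have rV: "r \<in> V1" "r \<in> V2" using I by auto
  have conn: "connected_graph (V1 \<union> V2) (E1 \<union> E2)"
    unfolding connected_graph_def
  proof (intro ballI)
    fix u v assume "u \<in> V1 \<union> V2" "v \<in> V1 \<union> V2"
    then show "(u, v) \<in> ?rel\<^sup>*"
    proof (elim UnE)
      assume "u \<in> V1" "v \<in> V1" then show ?thesis by (rule m1)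
    next
      assume "u \<in> V2" "v \<in> V2" then show ?thesis by (rule m2)
    next
      assume "u \<in> V1" "v \<in> V2" then show ?thesis using rtrancl_trans[OF m1[OF _ rV(1)] m2[OF rV(2)]] by blast
    next
      assume "u \<in> V2" "v \<in> V1" then show ?thesis using rtrancl_trans[OF m2[OF _ rV(2)] m1[OF rV(1)]] by blast
    qed
  qed
  have nc: "\<not> has_cycle (E1 \<union> E2)"
  proof
    assume "has_cycle (E1 \<union> E2)"
    then obtain vs where c: "cyc (E1 \<union> E2) vs" using has_cycle_cyc by blast
    obtain ws where cw: "cyc (E1 \<union> E2) ws" and hw: "hd ws = r \<or> r \<notin> set ws"
    proof (cases "r \<in> set vs")
      case True
      then obtain i where i: "i < length vs" "vs ! i = r" by (metis in_set_conv_nth)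
      have "vs \<noteq> []" using i by auto
      then have "hd (rotate i vs) = r" using i by (simp add: hd_rotate_conv_nth)
      then show ?thesis using that cyc_rotate[OF c] by blast
    next
      case False then show ?thesis using that c by blast
    qed
    have "{ws ! 0, ws ! (0+1)} \<in> E1 \<union> E2" using cw unfolding cyc_def by auto
    then have "ws ! 1 \<in> V1 \<or> ws ! 1 \<in> V2" using graph_on_edge[OF g] by auto
    then show False
    proof
      assume "ws ! 1 \<in> V1"
      then have "cyc E1 ws" using cyc_side[OF cw g1 g2 I hw] by blast
      then show False using a1 has_cycle_cyc by blast
    next
      assume "ws ! 1 \<in> V2"
      moreover have "cyc (E2 \<union> E1) ws" using cw by (simp add: Un_commute)
      moreover have "V2 \<inter> V1 = {r}" using I by blast
      ultimately have "cyc E2 ws" using cyc_side[OF _ g2 g1 _ hw] by blast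
      then show False using a2 has_cycle_cyc by blast
    qed
  qed
  show ?thesis unfolding is_tree_def using g conn nc by blast
qed



lemma graph_on_sub:
  assumes "graph_on V E" "e \<in> E" shows "e \<subseteq> V"
proof -
  obtain u v where "e = {u, v}" "u \<in> V" "v \<in> V" using assms unfolding graph_on_def by meson
  then show ?thesis by simp
qed

lemma degree_union:
  assumes "finite E1" "finite E2" "E1 \<inter> E2 = {}"
  shows "degree (E1 \<union> E2) v = degree E1 v + degree E2 v"
proof -
  have "{e \<in> E1 \<union> E2. v \<in> e} = {e \<in> E1. v \<in> e} \<union> {e \<in> E2. v \<in> e}" by blast
  then show ?thesis unfolding degree_def using assms by (simp add: card_Un_disjoint disjoint_iff)
qed

lemma degree_out:
  assumes "graph_on V E" "v \<notin> V" shows "degree E v = 0"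
proof -
  have e: "{e \<in> E. v \<in> e} = {}" using assms graph_on_sub by blast
  show ?thesis unfolding degree_def e by simp
qed

lemma graph_finite:
  assumes "graph_on V E" "finite V" shows "finite E"
proof -
  have "E \<subseteq> Pow V" using assms graph_on_sub by blast
  then show ?thesis using assms finite_subset by blast
qed

lemma edges_disjoint:
  assumes "graph_on V1 E1" "graph_on V2 E2" "V1 \<inter> V2 = {r}"
  shows "E1 \<inter> E2 = {}"
proof (rule ccontr)
  assume "E1 \<inter> E2 \<noteq> {}"
  then obtain e where e: "e \<in> E1" "e \<in> E2" by blast
  then obtain u v where uv: "e = {u,v}" "u \<noteq> v" using assms(1) unfolding graph_on_def by meson
  then have "u \<in> V1 \<inter> V2" "v \<in> V1 \<inter> V2" using graph_on_sub assms e by blast+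
  then have "u = r" "v = r" using assms(3) by auto
  then show False using uv by simp
qed

lemma seg_half:
  fixes a b r n x :: point
  assumes a: "a = r \<or> n \<bullet> (a - r) > 0" and b: "b = r \<or> n \<bullet> (b - r) > 0"
    and x: "x \<in> closed_segment a b" and le: "n \<bullet> (x - r) \<le> 0"
  shows "x = r \<and> (a = r \<or> b = r)"
proof -
  obtain u where u: "0 \<le> u" "u \<le> 1" "x = (1 - u) *\<^sub>R a + u *\<^sub>R b"
    using x by (auto simp: in_segment)
  define A where "A = n \<bullet> (a - r)"
  define B where "B = n \<bullet> (b - r)"
  have xr: "x - r = (1 - u) *\<^sub>R (a - r) + u *\<^sub>R (b - r)" using u(3) by (simp add: algebra_simps)
  have eq: "n \<bullet> (x - r) = (1 - u) * A + u * B" unfolding A_def B_def xr by (simp add: inner_add_right)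
  have A0: "A \<ge> 0" "a \<noteq> r \<Longrightarrow> A > 0" using a unfolding A_def by auto
  have B0: "B \<ge> 0" "b \<noteq> r \<Longrightarrow> B > 0" using b unfolding B_def by auto
  have t1: "(1 - u) * A \<ge> 0" "u * B \<ge> 0" using A0 B0 u by auto
  have z1: "(1 - u) * A = 0" and z2: "u * B = 0" using eq le t1 by linarith+
  show ?thesis
  proof (cases "a = r")
    case False
    then have "u = 1" using z1 A0 by auto
    then have "b = r" using z2 B0 by fastforce
    then show ?thesis using u \<open>u = 1\<close> by simp
  next
    case True
    show ?thesis
    proof (cases "b = r")
      case False
      then have "u = 0" using z2 B0 by auto
      then show ?thesis using u True by simp
    next
      case bT: True
      then have "x = r" using u True by (simp add: algebra_simps flip: scaleR_add_left)
      then show ?thesis using True by simp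
    qed
  qed
qed

lemma seg_sep:
  fixes a b c d r n :: point
  assumes "a = r \<or> n \<bullet> (a - r) > 0" "b = r \<or> n \<bullet> (b - r) > 0"
    "c = r \<or> n \<bullet> (c - r) < 0" "d = r \<or> n \<bullet> (d - r) < 0"
  shows "closed_segment a b \<inter> closed_segment c d \<subseteq> {a,b} \<inter> {c,d}"
proof
  fix x assume x: "x \<in> closed_segment a b \<inter> closed_segment c d"
  have c': "c = r \<or> (-n) \<bullet> (c - r) > 0" "d = r \<or> (-n) \<bullet> (d - r) > 0" using assms(3,4) by auto
  show "x \<in> {a,b} \<inter> {c,d}"
  proof (cases "n \<bullet> (x - r) \<le> 0")
    case True
    then have h: "x = r \<and> (a = r \<or> b = r)" using seg_half[OF assms(1,2)] x by blast
    then have "(-n) \<bullet> (x - r) \<le> 0" by simp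
    then have "x = r \<and> (c = r \<or> d = r)" using seg_half[OF c'] x by blast
    then show ?thesis using h by blast
  next
    case False
    then have "(-n) \<bullet> (x - r) \<le> 0" by simp
    then have "x = r \<and> (c = r \<or> d = r)" using seg_half[OF c'] x by blast
    then show ?thesis using False by simp
  qed
qed

lemma noncross_glue:
  fixes E1 E2 :: "point set set"
  assumes nc1: "non_crossing E1" and nc2: "non_crossing E2"
    and g1: "graph_on (insert r S1) E1" and g2: "graph_on (insert r S2) E2"
    and s1: "\<forall>p\<in>S1. n \<bullet> (p - r) > 0" and s2: "\<forall>p\<in>S2. n \<bullet> (p - r) < 0"
  shows "non_crossing (E1 \<union> E2)"
  unfolding non_crossing_def
proof (intro allI impI)
  fix a b c d
  assume ab: "{a, b} \<in> E1 \<union> E2" and cd: "{c, d} \<in> E1 \<union> E2" and ne: "{a, b} \<noteq> {c, d}"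
  have side1: "x = r \<or> n \<bullet> (x - r) > 0" if "{x,y} \<in> E1" for x y
    using graph_on_edge(1)[OF g1 that] s1 by blast
  have side1': "y = r \<or> n \<bullet> (y - r) > 0" if "{x,y} \<in> E1" for x y
    using graph_on_edge(2)[OF g1 that] s1 by blast
  have side2: "x = r \<or> n \<bullet> (x - r) < 0" if "{x,y} \<in> E2" for x y
    using graph_on_edge(1)[OF g2 that] s2 by blast
  have side2': "y = r \<or> n \<bullet> (y - r) < 0" if "{x,y} \<in> E2" for x y
    using graph_on_edge(2)[OF g2 that] s2 by blast
  show "closed_segment a b \<inter> closed_segment c d \<subseteq> {a, b} \<inter> {c, d}"
  proof (cases "{a,b} \<in> E1")
    case T1: True
    show ?thesis
    proof (cases "{c,d} \<in> E1")
      case True then show ?thesis using nc1 T1 ne unfolding non_crossing_def by blast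
    next
      case False then have "{c,d} \<in> E2" using cd by blast
      then show ?thesis using seg_sep[OF side1[OF T1] side1'[OF T1] side2 side2'] by blast
    qed
  next
    case F1: False
    then have T2: "{a,b} \<in> E2" using ab by blast
    show ?thesis
    proof (cases "{c,d} \<in> E2")
      case True then show ?thesis using nc2 T2 ne unfolding non_crossing_def by blast
    next
      case False then have c1: "{c,d} \<in> E1" using cd by blast
      have "closed_segment c d \<inter> closed_segment a b \<subseteq> {c,d} \<inter> {a,b}"
        using seg_sep[OF side1[OF c1] side1'[OF c1] side2[OF T2] side2'[OF T2]] by blast
      then show ?thesis by blast
    qed
  qed
qed



lemma ivt_disc:
  fixes f :: "real \<Rightarrow> int" and C :: "real set"
  assumes finC: "finite C"
    and jump: "\<And>x y. x < y \<Longrightarrow> card (C \<inter> {x..y}) \<le> 1 \<Longrightarrow> \<bar>f y - f x\<bar> \<le> K"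
  shows "x0 < y0 \<Longrightarrow> x0 \<notin> C \<Longrightarrow> f x0 \<le> 0 \<Longrightarrow> f y0 \<ge> K + 1 \<Longrightarrow> \<exists>t. t \<notin> C \<and> 1 \<le> f t \<and> f t \<le> K"
proof (induction "card (C \<inter> {x0..y0})" arbitrary: x0 rule: less_induct)
  case less
  define M where "M = C \<inter> {x0..y0}"
  have finM: "finite M" using finC unfolding M_def by blast
  show ?case
  proof (cases "card M \<le> 1")
    case True
    then have "\<bar>f y0 - f x0\<bar> \<le> K" using jump less.prems unfolding M_def by blast
    then show ?thesis using less.prems by linarith
  next
    case False
    then have neM: "M \<noteq> {}" by auto
    define c1 where "c1 = Min M"
    have c1M: "c1 \<in> M" using finM neM unfolding c1_def by simp
    have c1le: "\<And>c. c \<in> M \<Longrightarrow> c1 \<le> c" using finM unfolding c1_def by simp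
    define M' where "M' = M - {c1}"
    have finM': "finite M'" using finM unfolding M'_def by blast
    have "card M' = card M - 1" using c1M finM unfolding M'_def by simp
    then have neM': "M' \<noteq> {}" using False by auto
    define c2 where "c2 = Min M'"
    have c2M: "c2 \<in> M'" using finM' neM' unfolding c2_def by simp
    have c2le: "\<And>c. c \<in> M' \<Longrightarrow> c2 \<le> c" using finM' unfolding c2_def by simp
    have c12: "c1 < c2" using c2M c1le unfolding M'_def by force
    have x0c1: "x0 < c1" using c1M less.prems(2) unfolding M_def by (metis IntD1 IntD2 atLeastAtMost_iff order_le_less)
    have c2y0: "c2 \<le> y0" using c2M unfolding M'_def M_def by auto
    define x1 where "x1 = (c1 + c2) / 2"
    have x1b: "c1 < x1" "x1 < c2" using c12 unfolding x1_def by auto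
    have x1C: "x1 \<notin> C"
    proof
      assume "x1 \<in> C"
      then have "x1 \<in> M'" using x1b x0c1 c2y0 unfolding M'_def M_def by auto
      then show False using c2le x1b by fastforce
    qed
    have sub1: "C \<inter> {x0..x1} \<subseteq> {c1}"
    proof
      fix c assume c: "c \<in> C \<inter> {x0..x1}"
      then have "c \<in> M" using x1b c2y0 unfolding M_def by auto
      show "c \<in> {c1}"
      proof (rule ccontr)
        assume "c \<notin> {c1}"
        then have "c \<in> M'" using \<open>c \<in> M\<close> unfolding M'_def by auto
        then show False using c2le c x1b by fastforce
      qed
    qed
    have "card (C \<inter> {x0..x1}) \<le> 1" using card_mono[OF _ sub1] by simp
    then have j1: "\<bar>f x1 - f x0\<bar> \<le> K" using jump x1b x0c1 by auto
    show ?thesis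
    proof (cases "1 \<le> f x1")
      case True
      then show ?thesis using x1C j1 less.prems by (intro exI[of _ x1]) linarith
    next
      case False
      have sub2: "C \<inter> {x1..y0} \<subseteq> M'" using x1b x0c1 unfolding M'_def M_def by auto
      have "card (C \<inter> {x1..y0}) \<le> card M'" using card_mono[OF finM' sub2] .
      also have "\<dots> < card M" using \<open>card M' = card M - 1\<close> neM finM card_gt_0_iff[of M] by linarith
      finally have lt: "card (C \<inter> {x1..y0}) < card (C \<inter> {x0..y0})" unfolding M_def .
      have "x1 < y0" "f x1 \<le> 0" using x1b c2y0 False by auto
      then show ?thesis
        using less.hyps[OF lt] x1C less.prems by blast
    qed
  qed
qed



lemma point_eqI: fixes u v :: point shows "u $ 1 = v $ 1 \<Longrightarrow> u $ 2 = v $ 2 \<Longrightarrow> u = v"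
  by (simp add: vec_eq_iff forall_2)

lemma cross_collinear:
  fixes r p q :: point
  assumes pr: "p \<noteq> r" and cr: "(p - r) $ 1 * (q - r) $ 2 = (p - r) $ 2 * (q - r) $ 1"
  shows "collinear {r, p, q}"
proof -
  define u where "u = p - r"
  define v where "v = q - r"
  have u0: "u \<noteq> 0" using pr unfolding u_def by simp
  have cr': "u $ 1 * v $ 2 = u $ 2 * v $ 1" using cr unfolding u_def v_def .
  have "\<exists>c. v = c *\<^sub>R u"
  proof (cases "u $ 1 = 0")
    case False
    show ?thesis
    proof (intro exI[of _ "v $ 1 / u $ 1"] point_eqI)
      show "v $ 1 = ((v $ 1 / u $ 1) *\<^sub>R u) $ 1" using False by simp
      show "v $ 2 = ((v $ 1 / u $ 1) *\<^sub>R u) $ 2" using False cr' by (simp add: field_simps)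
    qed
  next
    case True
    then have u2: "u $ 2 \<noteq> 0" using u0 point_eqI[of u 0] by auto
    show ?thesis
    proof (intro exI[of _ "v $ 2 / u $ 2"] point_eqI)
      show "v $ 2 = ((v $ 2 / u $ 2) *\<^sub>R u) $ 2" using u2 by simp
      show "v $ 1 = ((v $ 2 / u $ 2) *\<^sub>R u) $ 1" using u2 cr' True by (simp add: field_simps)
    qed
  qed
  then have "collinear {0, u, v}" using collinear_lemma by blast
  moreover have "collinear {p, r, q} = collinear {0, p - r, q - r}" by (rule collinear_3) simp
  moreover have "{p, r, q} = {r, p, q}" by blast
  ultimately show ?thesis unfolding u_def v_def by simp
qed

lemma inner_vector2:
  fixes x :: point shows "(vector [a, b] :: point) \<bullet> x = a * x $ 1 + b * x $ 2"
  by (simp add: inner_vec_def sum_2)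

lemma sep_exists:
  fixes r :: point and P :: "point set" and w :: "point \<Rightarrow> int" and K :: int
  assumes fin: "finite P" and rP: "r \<notin> P"
    and gp: "\<forall>p\<in>P. \<forall>q\<in>P. p \<noteq> q \<longrightarrow> \<not> collinear {r, p, q}"
    and wb: "\<forall>p\<in>P. \<bar>w p\<bar> \<le> K" and ws: "(\<Sum>p\<in>P. w p) = K + 1" and K0: "0 \<le> K"
  shows "\<exists>n. (\<forall>p\<in>P. n \<bullet> (p - r) \<noteq> 0) \<and> 1 \<le> (\<Sum>p\<in>{p\<in>P. n \<bullet> (p - r) > 0}. w p)
            \<and> (\<Sum>p\<in>{p\<in>P. n \<bullet> (p - r) > 0}. w p) \<le> K"
proof -
  have "finite ((\<lambda>p. - ((p - r) $ 1) / ((p - r) $ 2)) ` P)" using fin by simp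
  then obtain s :: real where s: "s \<notin> (\<lambda>p. - ((p - r) $ 1) / ((p - r) $ 2)) ` P"
    using ex_new_if_finite[OF infinite_UNIV_char_0] by blast
  define bb where "bb p = (p - r) $ 1 + s * (p - r) $ 2" for p
  define aa where "aa p = (p - r) $ 2 - s * (p - r) $ 1" for p
  define tp where "tp p = aa p / bb p" for p
  define nt where "nt t = (vector [- (s + t), 1 - t * s] :: point)" for t
  have bb0: "bb p \<noteq> 0" if "p \<in> P" for p
  proof
    assume b: "bb p = 0"
    show False
    proof (cases "(p - r) $ 2 = 0")
      case True
      then have "(p - r) $ 1 = 0" using b unfolding bb_def by simp
      then have "p - r = 0" using True point_eqI[of "p - r" 0] by simp
      then show False using that rP by simp
    next
      case False
      then have "s = - ((p - r) $ 1) / ((p - r) $ 2)" using b unfolding bb_def by (simp add: field_simps)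
      then show False using s that by blast
    qed
  qed
  have ntv: "nt t \<bullet> (p - r) = bb p * (tp p - t)" if "p \<in> P" for p t
    using bb0[OF that] unfolding nt_def tp_def inner_vector2 aa_def bb_def
    by (simp add: field_simps)
  have inj: "inj_on tp P"
  proof (rule inj_onI, rule ccontr)
    fix p q assume p: "p \<in> P" and q: "q \<in> P" and e: "tp p = tp q" and ne: "p \<noteq> q"
    have "aa p * bb q = aa q * bb p" using e bb0[OF p] bb0[OF q] unfolding tp_def by (simp add: field_simps)
    then have "(1 + s^2) * ((p - r) $ 1 * (q - r) $ 2 - (p - r) $ 2 * (q - r) $ 1) = 0"
      unfolding aa_def bb_def by (simp add: algebra_simps power2_eq_square)
    moreover have "1 + s^2 > 0" by (simp add: add_pos_nonneg)
    ultimately have "(p - r) $ 1 * (q - r) $ 2 = (p - r) $ 2 * (q - r) $ 1" by simp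
    moreover have "p \<noteq> r" using p rP by blast
    ultimately have "collinear {r, p, q}" using cross_collinear by blast
    then show False using gp p q ne by blast
  qed
  define g where "g t p = (if 0 < bb p * (tp p - t) then w p else 0)" for t p
  define f where "f t = (\<Sum>p\<in>P. g t p)" for t
  have fsum: "(\<Sum>p\<in>{p\<in>P. nt t \<bullet> (p - r) > 0}. w p) = f t" for t
  proof -
    have "(\<Sum>p\<in>{p\<in>P. nt t \<bullet> (p - r) > 0}. w p) = (\<Sum>p\<in>P. if nt t \<bullet> (p - r) > 0 then w p else 0)"
      using fin by (simp add: sum.inter_filter)
    also have "\<dots> = f t" unfolding f_def g_def by (intro sum.cong refl) (simp add: ntv)
    finally show ?thesis .
  qed
  define C where "C = tp ` P"
  have finC: "finite C" using fin unfolding C_def by simp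
  have jump: "\<bar>f y - f x\<bar> \<le> K" if xy: "x < y" and cC: "card (C \<inter> {x..y}) \<le> 1" for x y
  proof -
    define D where "D = {p\<in>P. tp p \<in> {x..y}}"
    have DP: "D \<subseteq> P" unfolding D_def by blast
    have same: "g y p - g x p = 0" if "p \<in> P - D" for p
    proof -
      have "tp p < x \<or> tp p > y" using that unfolding D_def by auto
      then have "(tp p - y < 0 \<and> tp p - x < 0) \<or> (tp p - y > 0 \<and> tp p - x > 0)" using xy by linarith
      then have "(0 < bb p * (tp p - y)) = (0 < bb p * (tp p - x))"
      proof
        assume c: "tp p - y < 0 \<and> tp p - x < 0"
        have "(0 < bb p * (tp p - y)) = (bb p < 0)" "(0 < bb p * (tp p - x)) = (bb p < 0)"
          using c by (auto simp: zero_less_mult_iff)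
        then show ?thesis by simp
      next
        assume c: "tp p - y > 0 \<and> tp p - x > 0"
        have "(0 < bb p * (tp p - y)) = (bb p > 0)" "(0 < bb p * (tp p - x)) = (bb p > 0)"
          using c by (auto simp: zero_less_mult_iff)
        then show ?thesis by simp
      qed
      then show ?thesis unfolding g_def by simp
    qed
    have "f y - f x = (\<Sum>p\<in>P. g y p - g x p)" unfolding f_def by (simp add: sum_subtractf)
    also have "\<dots> = (\<Sum>p\<in>D. g y p - g x p)"
    proof -
      have "\<forall>i\<in>P - D. g y i - g x i = 0" using same by blast
      then show ?thesis by (rule sum.mono_neutral_right[OF fin DP])
    qed
    finally have fd: "f y - f x = (\<Sum>p\<in>D. g y p - g x p)" .
    have "card D = card (tp ` D)" using inj DP by (simp add: card_image inj_on_subset)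
    also have "\<dots> \<le> card (C \<inter> {x..y})"
      using finC DP unfolding C_def D_def by (intro card_mono) auto
    finally have cD: "card D \<le> 1" using cC by simp
    have finD: "finite D" using fin DP finite_subset by blast
    show ?thesis
    proof (cases "D = {}")
      case True then show ?thesis using fd K0 by simp
    next
      case False
      then have "card D \<noteq> 0" using finD by simp
      then have "card D = 1" using cD by linarith
      then obtain p0 where "D = {p0}" by (rule card_1_singletonE)
      moreover have "p0 \<in> P" using DP \<open>D = {p0}\<close> by blast
      ultimately have "f y - f x = g y p0 - g x p0" "\<bar>w p0\<bar> \<le> K" using fd wb by auto
      moreover have "g y p0 - g x p0 \<in> {0, w p0, - w p0}" unfolding g_def by simp
      ultimately show ?thesis using K0 by auto
    qed
  qed
  have Pne: "P \<noteq> {}" using ws K0 by auto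
  then have Cne: "C \<noteq> {}" unfolding C_def by simp
  define tl where "tl = Min C - 1"
  define th where "th = Max C + 1"
  have tlC: "tl < c" "th > c" if "c \<in> C" for c
  proof -
    have "Min C \<le> c" "c \<le> Max C" using that finC by simp_all
    then show "tl < c" "th > c" unfolding tl_def th_def by linarith+
  qed
  have tlnC: "tl \<notin> C" "th \<notin> C" using tlC by fastforce+
  have tlth: "tl < th" using tlC Cne by fastforce
  have ftl: "g tl p = (if bb p > 0 then w p else 0)" if "p \<in> P" for p
  proof -
    have "tp p - tl > 0" using tlC that unfolding C_def by fastforce
    then show ?thesis unfolding g_def by (simp add: zero_less_mult_iff)
  qed
  have fth: "g th p = (if bb p < 0 then w p else 0)" if "p \<in> P" for p
  proof -
    have "tp p - th < 0" using tlC that unfolding C_def by fastforce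
    then show ?thesis unfolding g_def by (auto simp: zero_less_mult_iff)
  qed
  have "f tl + f th = (\<Sum>p\<in>P. g tl p + g th p)" unfolding f_def by (simp add: sum.distrib)
  also have "\<dots> = (\<Sum>p\<in>P. w p)"
  proof (rule sum.cong)
    fix p assume p: "p \<in> P"
    show "g tl p + g th p = w p" using ftl[OF p] fth[OF p] bb0[OF p] by auto
  qed simp
  finally have fsum2: "f tl + f th = K + 1" using ws by simp
  have "\<exists>t. t \<notin> C \<and> 1 \<le> f t \<and> f t \<le> K"
  proof (cases "f tl \<le> 0")
    case True
    then show ?thesis using ivt_disc[OF finC jump tlth tlnC(1)] fsum2 by fastforce
  next
    case False
    show ?thesis
    proof (cases "f tl \<ge> K + 1")
      case True
      define h where "h t = K + 1 - f t" for t
      have jh: "\<bar>h y - h x\<bar> \<le> K" if "x < y" "card (C \<inter> {x..y}) \<le> 1" for x y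
        using jump[OF that] unfolding h_def by simp
      have "h tl \<le> 0" "h th \<ge> K + 1" using True fsum2 unfolding h_def by auto
      then obtain t where "t \<notin> C" "1 \<le> h t" "h t \<le> K" using ivt_disc[of C h K, OF finC jh tlth tlnC(1)] by blast
      then show ?thesis unfolding h_def by (intro exI[of _ t]) auto
    next
      case F2: False
      then show ?thesis using False tlnC by (intro exI[of _ tl]) auto
    qed
  qed
  then obtain t where t: "t \<notin> C" "1 \<le> f t" "f t \<le> K" by blast
  have "\<forall>p\<in>P. nt t \<bullet> (p - r) \<noteq> 0"
  proof
    fix p assume p: "p \<in> P"
    have "tp p \<noteq> t" using t p unfolding C_def by blast
    then show "nt t \<bullet> (p - r) \<noteq> 0" using ntv[OF p] bb0[OF p] by simp
  qed
  then show ?thesis using t fsum by (intro exI[of _ "nt t"]) auto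
qed



definition good :: "point set \<Rightarrow> point set \<Rightarrow> (point \<Rightarrow> nat) \<Rightarrow> bool" where
  "good R B d \<longleftrightarrow> finite R \<and> finite B \<and> R \<inter> B = {} \<and> no_three_collinear (R \<union> B)
     \<and> (\<forall>x\<in>R. 2 \<le> d x) \<and> (\<Sum>x\<in>R. int (d x) - 2) + 2 = int (card B)"

definition sol :: "point set \<Rightarrow> point set \<Rightarrow> (point \<Rightarrow> nat) \<Rightarrow> bool" where
  "sol R B d \<longleftrightarrow> (\<exists>E. is_tree (R \<union> B) E \<and> non_crossing E \<and> (\<forall>b\<in>B. degree E b = 1)
     \<and> (\<forall>x\<in>R. degree E x = d x))"

lemma base_case:
  fixes b1 b2 :: point
  assumes "b1 \<noteq> b2"
  shows "is_tree {b1, b2} {{b1, b2}} \<and> non_crossing {{b1, b2}} \<and> degree {{b1, b2}} b1 = 1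
     \<and> degree {{b1, b2}} b2 = 1"
proof -
  let ?E = "{{b1, b2}}"
  have g: "graph_on {b1, b2} ?E" unfolding graph_on_def using assms by blast
  let ?rel = "{(x, y). {x, y} \<in> ?E}"
  have e12: "(b1, b2) \<in> ?rel\<^sup>*" by (rule r_into_rtrancl) simp
  have e21: "(b2, b1) \<in> ?rel\<^sup>*" by (rule r_into_rtrancl) (simp add: insert_commute)
  have c: "connected_graph {b1, b2} ?E" unfolding connected_graph_def using e12 e21 by blast
  have nc: "\<not> has_cycle ?E"
  proof
    assume "has_cycle ?E"
    then obtain vs where "cyc ?E vs" using has_cycle_cyc by blast
    then have l: "length vs \<ge> 3" and d: "distinct vs"
      and ed: "\<forall>i < length vs - 1. {vs ! i, vs ! (i+1)} \<in> ?E" unfolding cyc_def by auto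
    have "{vs ! 0, vs ! Suc 0} = {b1, b2}" "{vs ! Suc 0, vs ! Suc (Suc 0)} = {b1, b2}" using ed l by auto
    then have "vs ! 0 = vs ! Suc (Suc 0) \<or> vs ! 0 = vs ! Suc 0 \<or> vs ! Suc 0 = vs ! Suc (Suc 0)" by (auto simp: doubleton_eq_iff)
    moreover have "vs \<noteq> []" using l by auto
    moreover have "vs ! 0 \<noteq> vs ! Suc (Suc 0)" "vs ! 0 \<noteq> vs ! Suc 0" "vs ! Suc 0 \<noteq> vs ! Suc (Suc 0)"
      using d l \<open>vs \<noteq> []\<close> nth_eq_iff_index_eq[OF d, of 0 "Suc (Suc 0)"] nth_eq_iff_index_eq[OF d, of 0 "Suc 0"]
        nth_eq_iff_index_eq[OF d, of "Suc 0" "Suc (Suc 0)"] by auto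
    ultimately show False by blast
  qed
  have ncr: "non_crossing ?E" unfolding non_crossing_def by auto
  have "{e \<in> ?E. b1 \<in> e} = ?E" "{e \<in> ?E. b2 \<in> e} = ?E" by auto
  then have "degree ?E b1 = 1" "degree ?E b2 = 1" unfolding degree_def by simp_all
  then show ?thesis using g c nc ncr unfolding is_tree_def by blast
qed



lemma wsum_split:
  fixes R B S :: "point set" and d :: "point \<Rightarrow> nat"
  assumes fS: "finite S" and sub: "S \<subseteq> R \<union> B" and dj: "R \<inter> B = {}"
  shows "(\<Sum>p\<in>S. (if p \<in> B then 1 else 2 - int (d p))) = int (card (B \<inter> S)) - (\<Sum>x\<in>R\<inter>S. int (d x) - 2)"
proof -
  have S: "S = (B \<inter> S) \<union> (R \<inter> S)" using sub by blast
  have dj2: "(B \<inter> S) \<inter> (R \<inter> S) = {}" using dj by blast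
  have f1: "finite (B \<inter> S)" "finite (R \<inter> S)" using fS by auto
  have "(\<Sum>p\<in>S. (if p \<in> B then 1 else 2 - int (d p))) =
        (\<Sum>p\<in>B \<inter> S. (if p \<in> B then 1 else 2 - int (d p))) + (\<Sum>p\<in>R \<inter> S. (if p \<in> B then 1 else 2 - int (d p)))"
    by (subst S, rule sum.union_disjoint[OF f1 dj2])
  also have "(\<Sum>p\<in>B \<inter> S. (if p \<in> B then 1 else 2 - int (d p))) = (\<Sum>p\<in>B \<inter> S. 1)"
    by (rule sum.cong) auto
  also have "(\<Sum>p\<in>R \<inter> S. (if p \<in> B then 1 else 2 - int (d p))) = (\<Sum>p\<in>R \<inter> S. 2 - int (d p))"
    using dj by (intro sum.cong) auto
  also have "(\<Sum>p\<in>R \<inter> S. 2 - int (d p)) = - (\<Sum>p\<in>R \<inter> S. int (d p) - 2)"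
    by (simp add: sum_negf[symmetric])
  finally show ?thesis by simp
qed

lemma no3_subset: "no_three_collinear P \<Longrightarrow> Q \<subseteq> P \<Longrightarrow> no_three_collinear Q"
  unfolding no_three_collinear_def by blast

lemma main: "good R B d \<Longrightarrow> sol R B d"
proof (induction "card (R \<union> B)" arbitrary: R B d rule: less_induct)
  case less
  have fR: "finite R" and fB: "finite B" and dj: "R \<inter> B = {}" and n3: "no_three_collinear (R \<union> B)"
    and d2: "\<forall>x\<in>R. 2 \<le> d x" and sm: "(\<Sum>x\<in>R. int (d x) - 2) + 2 = int (card B)"
    using less.prems unfolding good_def by auto
  show ?case
  proof (cases "R = {}")
    case True
    then have "card B = 2" using sm by simp
    then obtain b1 b2 where B: "B = {b1, b2}" "b1 \<noteq> b2" by (meson card_2_iff)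
    show ?thesis unfolding sol_def using base_case[OF B(2)] True B by auto
  next
    case False
    obtain r where rR: "r \<in> R" and rmax: "\<forall>x\<in>R. d x \<le> d r"
    proof -
      have "Max (d ` R) \<in> d ` R" using False fR by simp
      then obtain r where "r \<in> R" "d r = Max (d ` R)" by auto
      moreover have "\<forall>x\<in>R. d x \<le> Max (d ` R)" using fR by simp
      ultimately show ?thesis using that by auto
    qed
    define P' where "P' = (R \<union> B) - {r}"
    define w where "w p = (if p \<in> B then 1 else 2 - int (d p))" for p
    define K where "K = int (d r) - 1"
    have fRB: "finite (R \<union> B)" using fR fB by simp
    have fP': "finite P'" using fRB unfolding P'_def by simp
    have rB: "r \<notin> B" using rR dj by blast
    have dr2: "2 \<le> d r" using d2 rR by blast
    have wsplit: "(\<Sum>p\<in>S. w p) = int (card (B \<inter> S)) - (\<Sum>x\<in>R\<inter>S. int (d x) - 2)"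
      if "S \<subseteq> R \<union> B" for S
      unfolding w_def using wsum_split[OF finite_subset[OF that fRB] that dj] .
    have "(\<Sum>p\<in>R \<union> B. w p) = 2"
      using wsplit[of "R \<union> B"] sm by (simp add: Int_absorb2 Int_absorb1)
    moreover have "(\<Sum>p\<in>R \<union> B. w p) = w r + (\<Sum>p\<in>P'. w p)"
      unfolding P'_def using fRB rR by (simp add: sum.remove)
    moreover have "w r = 2 - int (d r)" unfolding w_def using rB by simp
    ultimately have wP: "(\<Sum>p\<in>P'. w p) = K + 1" unfolding K_def by simp
    have K1: "1 \<le> K" using dr2 unfolding K_def by simp
    have wb: "\<forall>p\<in>P'. \<bar>w p\<bar> \<le> K"
    proof
      fix p assume p: "p \<in> P'"
      show "\<bar>w p\<bar> \<le> K"
      proof (cases "p \<in> B")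
        case True then show ?thesis using K1 unfolding w_def by simp
      next
        case False
        then have "p \<in> R" using p unfolding P'_def by blast
        then have "2 \<le> d p" "d p \<le> d r" using d2 rmax by auto
        then show ?thesis using False unfolding w_def K_def by simp
      qed
    qed
    have rP': "r \<notin> P'" unfolding P'_def by blast
    have gp: "\<forall>p\<in>P'. \<forall>q\<in>P'. p \<noteq> q \<longrightarrow> \<not> collinear {r, p, q}"
    proof (intro ballI impI)
      fix p q assume p: "p \<in> P'" and q: "q \<in> P'" and pq: "p \<noteq> q"
      have "r \<in> R \<union> B" "p \<in> R \<union> B" "q \<in> R \<union> B" "r \<noteq> p" "r \<noteq> q" using p q rR unfolding P'_def by auto
      then show "\<not> collinear {r, p, q}" using n3 pq unfolding no_three_collinear_def by metis
    qed
    obtain n where nz: "\<forall>p\<in>P'. n \<bullet> (p - r) \<noteq> 0"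
      and D1: "1 \<le> (\<Sum>p\<in>{p\<in>P'. n \<bullet> (p - r) > 0}. w p)" "(\<Sum>p\<in>{p\<in>P'. n \<bullet> (p - r) > 0}. w p) \<le> K"
      using sep_exists[OF fP' rP' gp wb wP] K1 by auto
    define S1 where "S1 = {p\<in>P'. n \<bullet> (p - r) > 0}"
    define S2 where "S2 = {p\<in>P'. n \<bullet> (p - r) < 0}"
    have S12: "P' = S1 \<union> S2" "S1 \<inter> S2 = {}"
    proof -
      show "S1 \<inter> S2 = {}" unfolding S1_def S2_def by auto
      show "P' = S1 \<union> S2"
      proof
        show "S1 \<union> S2 \<subseteq> P'" unfolding S1_def S2_def by auto
        show "P' \<subseteq> S1 \<union> S2"
        proof
          fix p assume p: "p \<in> P'"
          then have "n \<bullet> (p - r) > 0 \<or> n \<bullet> (p - r) < 0" using nz by (meson linorder_neqE_linordered_idom)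
          then show "p \<in> S1 \<union> S2" using p unfolding S1_def S2_def by blast
        qed
      qed
    qed
    have fS: "finite S1" "finite S2" using fP' unfolding S1_def S2_def by auto
    have "(\<Sum>p\<in>P'. w p) = (\<Sum>p\<in>S1. w p) + (\<Sum>p\<in>S2. w p)"
      using S12 fS by (simp add: sum.union_disjoint)
    then have D2: "(\<Sum>p\<in>S2. w p) = int (d r) - (\<Sum>p\<in>S1. w p)" using wP unfolding K_def by simp
    have side: "\<exists>E. is_tree (insert r S) E \<and> non_crossing E \<and> (\<forall>b\<in>B\<inter>S. degree E b = 1)
        \<and> (\<forall>x\<in>R\<inter>S. degree E x = d x) \<and> int (degree E r) = (\<Sum>p\<in>S. w p)"
      if SP: "S \<subseteq> P'" and Sne: "S \<noteq> P'" and lo: "1 \<le> (\<Sum>p\<in>S. w p)" and hi: "(\<Sum>p\<in>S. w p) \<le> K" for S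
    proof -
      have SRB: "S \<subseteq> R \<union> B" using SP unfolding P'_def by blast
      have rS: "r \<notin> S" using SP rP' by blast
      have fS: "finite S" using SP fP' finite_subset by blast
      have ins: "insert r S \<subset> R \<union> B" using SP Sne rR unfolding P'_def by blast
      have lt: "card (insert r S) < card (R \<union> B)" using psubset_card_mono[OF fRB ins] .
      have n3S: "no_three_collinear (insert r S)" using no3_subset[OF n3] ins by blast
      have ws: "(\<Sum>p\<in>S. w p) = int (card (B \<inter> S)) - (\<Sum>x\<in>R\<inter>S. int (d x) - 2)" using wsplit[OF SRB] .
      show ?thesis
      proof (cases "(\<Sum>p\<in>S. w p) = 1")
        case True
        define R' where "R' = R \<inter> S"
        define B' where "B' = insert r (B \<inter> S)"
        have U: "R' \<union> B' = insert r S" unfolding R'_def B'_def using SRB by blast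
        have cB': "card B' = card (B \<inter> S) + 1" unfolding B'_def using rS fS by simp
        have "good R' B' d" unfolding good_def
        proof (intro conjI)
          show "finite R'" "finite B'" unfolding R'_def B'_def using fS by auto
          show "R' \<inter> B' = {}" unfolding R'_def B'_def using dj rS by blast
          show "no_three_collinear (R' \<union> B')" using n3S U by simp
          show "\<forall>x\<in>R'. 2 \<le> d x" using d2 unfolding R'_def by blast
          show "(\<Sum>x\<in>R'. int (d x) - 2) + 2 = int (card B')" using True ws cB' unfolding R'_def by simp
        qed
        then have "sol R' B' d" using less.hyps lt U by metis
        then obtain E where E: "is_tree (insert r S) E" "non_crossing E" "\<forall>b\<in>B'. degree E b = 1"
          "\<forall>x\<in>R'. degree E x = d x" unfolding sol_def U by blast
        show ?thesis using E True unfolding R'_def B'_def by (intro exI[of _ E]) auto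
      next
        case False
        define R' where "R' = insert r (R \<inter> S)"
        define B' where "B' = B \<inter> S"
        define d' where "d' = d(r := nat (\<Sum>p\<in>S. w p))"
        have U: "R' \<union> B' = insert r S" unfolding R'_def B'_def using SRB by blast
        have sR': "(\<Sum>x\<in>R'. int (d' x) - 2) = (int (nat (\<Sum>p\<in>S. w p)) - 2) + (\<Sum>x\<in>R \<inter> S. int (d x) - 2)"
        proof -
          have "(\<Sum>x\<in>R'. int (d' x) - 2) = (int (d' r) - 2) + (\<Sum>x\<in>R \<inter> S. int (d' x) - 2)"
            unfolding R'_def using fS rS by (simp add: sum.insert)
          also have "(\<Sum>x\<in>R \<inter> S. int (d' x) - 2) = (\<Sum>x\<in>R \<inter> S. int (d x) - 2)"
            using rS unfolding d'_def by (intro sum.cong) auto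
          finally show ?thesis unfolding d'_def by simp
        qed
        have "good R' B' d'" unfolding good_def
        proof (intro conjI)
          show "finite R'" "finite B'" unfolding R'_def B'_def using fS by auto
          show "R' \<inter> B' = {}" unfolding R'_def B'_def using dj rB by blast
          show "no_three_collinear (R' \<union> B')" using n3S U by simp
          show "\<forall>x\<in>R'. 2 \<le> d' x" using d2 False lo unfolding R'_def d'_def by auto
          show "(\<Sum>x\<in>R'. int (d' x) - 2) + 2 = int (card B')" using sR' ws lo unfolding B'_def by simp
        qed
        then have "sol R' B' d'" using less.hyps lt U by metis
        then obtain E where E: "is_tree (insert r S) E" "non_crossing E" "\<forall>b\<in>B'. degree E b = 1"
          "\<forall>x\<in>R'. degree E x = d' x" unfolding sol_def U by blast
        have "\<forall>x\<in>R \<inter> S. degree E x = d x" using E(4) rS unfolding R'_def d'_def by auto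
        moreover have "int (degree E r) = (\<Sum>p\<in>S. w p)" using E(4) lo unfolding R'_def d'_def by auto
        ultimately show ?thesis using E unfolding B'_def by (intro exI[of _ E]) auto
      qed
    qed
    have S1P: "S1 \<subseteq> P'" "S2 \<subseteq> P'" using S12 by auto
    have lo2: "1 \<le> (\<Sum>p\<in>S2. w p)" and hi2: "(\<Sum>p\<in>S2. w p) \<le> K"
      using D2 D1 unfolding S1_def K_def by linarith+
    have D1': "1 \<le> (\<Sum>p\<in>S1. w p)" "(\<Sum>p\<in>S1. w p) \<le> K" using D1 unfolding S1_def by auto
    have S1ne: "S1 \<noteq> P'"
    proof
      assume "S1 = P'"
      then have "S2 = {}" using S12 by blast
      then show False using lo2 by simp
    qed
    have S2ne: "S2 \<noteq> P'"
    proof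
      assume "S2 = P'"
      then have "S1 = {}" using S12 by blast
      then show False using D1' by simp
    qed
    obtain E1 where E1: "is_tree (insert r S1) E1" "non_crossing E1" "\<forall>b\<in>B\<inter>S1. degree E1 b = 1"
        "\<forall>x\<in>R\<inter>S1. degree E1 x = d x" "int (degree E1 r) = (\<Sum>p\<in>S1. w p)"
      using side[OF S1P(1) S1ne D1'] by blast
    obtain E2 where E2: "is_tree (insert r S2) E2" "non_crossing E2" "\<forall>b\<in>B\<inter>S2. degree E2 b = 1"
        "\<forall>x\<in>R\<inter>S2. degree E2 x = d x" "int (degree E2 r) = (\<Sum>p\<in>S2. w p)"
      using side[OF S1P(2) S2ne lo2 hi2] by blast
    have rS: "r \<notin> S1" "r \<notin> S2" using S1P rP' by auto
    have I: "insert r S1 \<inter> insert r S2 = {r}" using S12 by blast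
    have U: "insert r S1 \<union> insert r S2 = R \<union> B" using S12 rR unfolding P'_def by blast
    have g1: "graph_on (insert r S1) E1" and g2: "graph_on (insert r S2) E2"
      using E1(1) E2(1) unfolding is_tree_def by auto
    have fE: "finite E1" "finite E2" using graph_finite[OF g1] graph_finite[OF g2] fS by auto
    have dE: "E1 \<inter> E2 = {}" using edges_disjoint[OF g1 g2 I] .
    have deg: "degree (E1 \<union> E2) v = degree E1 v + degree E2 v" for v using degree_union[OF fE dE] .
    have tree: "is_tree (R \<union> B) (E1 \<union> E2)" using tree_glue[OF E1(1) E2(1) I] U by simp
    have s1: "\<forall>p\<in>S1. n \<bullet> (p - r) > 0" and s2: "\<forall>p\<in>S2. n \<bullet> (p - r) < 0" unfolding S1_def S2_def by auto
    have nc: "non_crossing (E1 \<union> E2)" using noncross_glue[OF E1(2) E2(2) g1 g2 s1 s2] .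
    have other: "degree (E1 \<union> E2) v = (if v \<in> S1 then degree E1 v else degree E2 v)" if "v \<in> P'" for v
    proof (cases "v \<in> S1")
      case True
      then have "v \<notin> insert r S2" using S12 rS by blast
      then show ?thesis using True deg degree_out[OF g2] by simp
    next
      case False
      then have "v \<notin> insert r S1" using rS that unfolding P'_def by blast
      then show ?thesis using False deg degree_out[OF g1] by simp
    qed
    have degB: "\<forall>b\<in>B. degree (E1 \<union> E2) b = 1"
    proof
      fix b assume b: "b \<in> B"
      then have bP: "b \<in> P'" using rB unfolding P'_def by blast
      show "degree (E1 \<union> E2) b = 1" using other[OF bP] E1(3) E2(3) b bP S12 by auto
    qed
    have degR: "\<forall>x\<in>R. degree (E1 \<union> E2) x = d x"
    proof
      fix x assume x: "x \<in> R"
      show "degree (E1 \<union> E2) x = d x"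
      proof (cases "x = r")
        case True
        have "int (degree (E1 \<union> E2) r) = int (degree E1 r) + int (degree E2 r)" using deg by simp
        also have "\<dots> = int (d r)" using E1(5) E2(5) D2 by simp
        finally show ?thesis using True by simp
      next
        case False
        then have xP: "x \<in> P'" using x unfolding P'_def by blast
        show ?thesis using other[OF xP] E1(4) E2(4) x xP S12 by auto
      qed
    qed
    show ?thesis unfolding sol_def using tree nc degB degR by blast
  qed
qed



lemma distribute:
  fixes R :: "'a set" and c :: nat
  assumes "finite R"
  shows "m \<le> c * card R \<Longrightarrow> \<exists>e. (\<forall>x\<in>R. e x \<le> c) \<and> (\<Sum>x\<in>R. e x) = m"
  using assms
proof (induction R arbitrary: m rule: finite_induct)
  case empty then show ?case by simp
next
  case (insert x F)
  have "m - min c m \<le> c * card F" using insert.prems insert.hyps by (auto simp: min_def)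
  then obtain e where e: "\<forall>y\<in>F. e y \<le> c" "(\<Sum>y\<in>F. e y) = m - min c m" using insert.IH by blast
  define e' where "e' = e(x := min c m)"
  have "(\<Sum>y\<in>insert x F. e' y) = e' x + (\<Sum>y\<in>F. e' y)" using insert.hyps by simp
  also have "(\<Sum>y\<in>F. e' y) = (\<Sum>y\<in>F. e y)" unfolding e'_def using insert.hyps by (intro sum.cong) auto
  finally have "(\<Sum>y\<in>insert x F. e' y) = m" using e unfolding e'_def by simp
  moreover have "\<forall>y\<in>insert x F. e' y \<le> c" using e unfolding e'_def by auto
  ultimately show ?case by blast
qed

theorem corollary2:
  fixes k :: nat and R B :: "point set"
  assumes "k \<ge> 2"
    and "finite R" and "finite B" and "R \<inter> B = {}"
    and "no_three_collinear (R \<union> B)"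
    and "2 \<le> card B" and "card B \<le> (k - 2) * card R + 2"
  shows "\<exists>E. is_tree (R \<union> B) E \<and> non_crossing E \<and> leaves (R \<union> B) E = B
            \<and> (\<forall>v \<in> R \<union> B. degree E v \<le> k)
            \<and> (card B = (k - 2) * card R + 2 \<longrightarrow> (\<forall>x \<in> R. degree E x = k))"
proof -
  obtain d where d: "\<forall>x\<in>R. 2 \<le> d x \<and> d x \<le> k" "(\<Sum>x\<in>R. int (d x) - 2) + 2 = int (card B)"
    and tight: "card B = (k - 2) * card R + 2 \<longrightarrow> (\<forall>x\<in>R. d x = k)"
  proof (cases "card B = (k - 2) * card R + 2")
    case True
    have "(\<Sum>x\<in>R. int k - 2) + 2 = int (card B)" using True assms(1) by (simp add: of_nat_diff)
    then show ?thesis using that[of "\<lambda>_. k"] assms(1) by auto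
  next
    case False
    have "card B - 2 \<le> (k - 2) * card R" using assms(7) by simp
    then obtain e where e: "\<forall>x\<in>R. e x \<le> k - 2" "(\<Sum>x\<in>R. e x) = card B - 2"
      using distribute[OF assms(2)] by blast
    have "(\<Sum>x\<in>R. int (e x + 2) - 2) = int (\<Sum>x\<in>R. e x)" by simp
    then have "(\<Sum>x\<in>R. int (e x + 2) - 2) + 2 = int (card B)" using e(2) assms(6) by simp
    moreover have "\<forall>x\<in>R. 2 \<le> e x + 2 \<and> e x + 2 \<le> k" using e(1) assms(1) by auto
    ultimately show ?thesis using that[of "\<lambda>x. e x + 2"] False by blast
  qed
  have "good R B d" unfolding good_def using assms d by auto
  then obtain E where E: "is_tree (R \<union> B) E" "non_crossing E" "\<forall>b\<in>B. degree E b = 1"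
    "\<forall>x\<in>R. degree E x = d x" using main unfolding sol_def by blast
  have "leaves (R \<union> B) E = B"
  proof
    show "leaves (R \<union> B) E \<subseteq> B"
    proof
      fix v assume v: "v \<in> leaves (R \<union> B) E"
      then have "v \<in> R \<union> B" "degree E v = 1" unfolding leaves_def by auto
      moreover have "v \<in> R \<Longrightarrow> degree E v \<ge> 2" using E(4) d(1) by auto
      ultimately show "v \<in> B" by auto
    qed
    show "B \<subseteq> leaves (R \<union> B) E" using E(3) unfolding leaves_def by auto
  qed
  moreover have "\<forall>v \<in> R \<union> B. degree E v \<le> k" using E(3,4) d(1) assms(1) by auto
  moreover have "card B = (k - 2) * card R + 2 \<longrightarrow> (\<forall>x \<in> R. degree E x = k)" using tight E(4) by auto
  ultimately show ?thesis using E(1,2) by blast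
qed

end
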